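(* Let $T$ be a triangle with diameter $h_T$, maximum angle $\theta_M\in(0,\pi)$, edges $e_1,e_2,e_3$ and corresponding unit tangent vectors $\mathbf t_1,\mathbf t_2,\mathbf t_3$. Then $$\|\nabla v_h\|_{0,T}\le\frac{h_T^{1/2}}{\sqrt{2\sin(\theta_M)}}\sum_{i=1}^3\|\nabla v_h\cdot\mathbf t_i\|_{L^2(e_i)}\qquad\forall v_h\in\mathcal P_1(T).$$
   Context: $\mathcal P_1(T)$ is the space of affine functions on $T$. *)

theory Defs
  imports "HOL-Analysis.Analysis"
begin

definition vec_angle :: "real^2 \<Rightarrow> real^2 \<Rightarrow> real" where
  "vec_angle u w = arccos ((u \<bullet> w) / (norm u * norm w))"

definition max_angle :: "real^2 \<Rightarrow> real^2 \<Rightarrow> real^2 \<Rightarrow> real" where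
  "max_angle a b c = max (vec_angle (b - a) (c - a))
                       (max (vec_angle (a - b) (c - b)) (vec_angle (a - c) (b - c)))"

definition L2_norm_region :: "(real^2) set \<Rightarrow> (real^2 \<Rightarrow> real) \<Rightarrow> real" where
  "L2_norm_region S f = sqrt (integral S (\<lambda>x. (f x)^2))"

definition L2_norm_edge :: "real^2 \<Rightarrow> real^2 \<Rightarrow> (real^2 \<Rightarrow> real) \<Rightarrow> real" where
  "L2_norm_edge p q f = sqrt (integral {0..1} (\<lambda>s. (f (p + s *\<^sub>R (q - p)))^2 * dist p q))"

definition unit_tangent :: "real^2 \<Rightarrow> real^2 \<Rightarrow> real^2" where
  "unit_tangent p q = (1 / norm (q - p)) *\<^sub>R (q - p)"

end

theory Submission
  imports Defs
begin

lemma area_int: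
  fixes a b c :: "real^2" and k :: real
  shows "integral (convex hull {a,b,c}) (\<lambda>x. k) =
     k * (\<bar>(c $ 1 - a $ 1) * (b $ 2 - a $ 2) - (b $ 1 - a $ 1) * (c $ 2 - a $ 2)\<bar> / 2)"
proof -
  have cpt: "compact (convex hull {a,b,c})" by (simp add: compact_convex_hull)
  have lm: "convex hull {a,b,c} \<in> lmeasurable" using cpt by (simp add: lmeasurable_compact)
  have "integral (convex hull {a,b,c}) (\<lambda>x. k) = integral (convex hull {a,b,c}) (\<lambda>x. k *\<^sub>R (1::real))" by simp
  also have "\<dots> = k * measure lebesgue (convex hull {a,b,c})"
    by (simp only: integral_cmul lmeasure_integral[OF lm]) simp
  also have "measure lebesgue (convex hull {a,b,c}) = measure lborel (convex hull {a,b,c})"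
    using cpt by (simp add: measure_completion compact_imp_closed borel_closed)
  finally show ?thesis by (simp add: content_triangle)
qed

lemma edge_norm:
  fixes p q g :: "real^2"
  shows "L2_norm_edge p q (\<lambda>x. g \<bullet> unit_tangent p q) = \<bar>g \<bullet> (q - p)\<bar> / norm (q - p) * sqrt (norm (q - p))"
  unfolding L2_norm_edge_def unit_tangent_def
  by (simp add: real_sqrt_mult dist_norm norm_minus_commute)

definition det2 :: "real^2 \<Rightarrow> real^2 \<Rightarrow> real" where "det2 u w = u$1*w$2 - u$2*w$1"

lemma inner2: "(u::real^2) \<bullet> w = u$1*w$1 + u$2*w$2"
  by (simp add: inner_vec_def sum_2)

lemma normsq2: "(norm (u::real^2))^2 = u$1^2 + u$2^2"
  by (simp only: power2_norm_eq_inner inner_vec_def sum_2) (simp add: power2_eq_square)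

lemma id1: fixes u w :: "real^2" shows "(norm u * norm w)^2 - (u \<bullet> w)^2 = (det2 u w)^2"
  unfolding power_mult_distrib normsq2 inner2 det2_def by algebra

lemma id2: fixes u w g :: "real^2" shows "(norm g)^2 * (det2 u w)^2 = (g\<bullet>u)^2 * (norm w)^2 - 2*(g\<bullet>u)*(g\<bullet>w)*(u\<bullet>w) + (g\<bullet>w)^2*(norm u)^2"
  unfolding normsq2 inner2 det2_def by algebra

lemma cs1: fixes u w :: "real^2"
  assumes pos: "norm u * norm w > 0"
  shows "\<bar>(u \<bullet> w) / (norm u * norm w)\<bar> \<le> 1"
proof -
  have "\<bar>(u \<bullet> w) / (norm u * norm w)\<bar> = \<bar>u \<bullet> w\<bar> / (norm u * norm w)" by (simp only: abs_divide) (use pos in simp)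
  also have "\<dots> \<le> 1" using Cauchy_Schwarz_ineq2[of u w] pos by (simp only: divide_le_eq_1_pos)
  finally show ?thesis .
qed

lemma sin_angle:
  fixes u w :: "real^2"
  assumes "u \<noteq> 0" "w \<noteq> 0"
  shows "sin (vec_angle u w) = \<bar>det2 u w\<bar> / (norm u * norm w)"
proof -
  have pos: "norm u * norm w > 0" using assms by simp
  have cs: "\<bar>(u \<bullet> w) / (norm u * norm w)\<bar> \<le> 1" using cs1[OF pos] .
  define N where "N = norm u * norm w"
  have Npos: "N > 0" using pos N_def by simp
  have "1 - ((u \<bullet> w) / N)^2 = (N^2 - (u \<bullet> w)^2) / N^2"
    using Npos by (simp add: diff_divide_distrib power_divide)
  also have "\<dots> = ((det2 u w) / N)^2" using id1[of u w] N_def by (simp add: power_divide)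
  finally have e: "1 - ((u \<bullet> w) / N)^2 = ((det2 u w) / N)^2" .
  have "sin (vec_angle u w) = sqrt (1 - ((u \<bullet> w) / N)^2)"
    unfolding vec_angle_def N_def using sin_arccos_abs[OF cs] by simp
  also have "\<dots> = \<bar>det2 u w\<bar> / N" unfolding e real_sqrt_abs abs_divide using Npos by simp
  finally show ?thesis unfolding N_def .
qed

lemma aux: fixes P Q W U c :: real
  assumes "- (P*Q*c) \<le> \<bar>P\<bar> * \<bar>Q\<bar> * (U * W)"
  shows "P^2 * W^2 - 2*P*Q*c + Q^2*U^2 \<le> (\<bar>P\<bar> * W + \<bar>Q\<bar> * U)^2"
proof -
  have "(\<bar>P\<bar> * W + \<bar>Q\<bar> * U)^2 = P^2 * W^2 + 2*(\<bar>P\<bar> * \<bar>Q\<bar> * (U * W)) + Q^2*U^2"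
    by (simp add: power2_eq_square algebra_simps abs_mult_self_eq)
  with assms show ?thesis by linarith
qed

lemma keyineq:
  fixes u w g :: "real^2"
  shows "(norm g)^2 * (det2 u w)^2 \<le> (\<bar>g \<bullet> u\<bar> * norm w + \<bar>g \<bullet> w\<bar> * norm u)^2"
proof -
  have "- ((g\<bullet>u)*(g\<bullet>w)*(u\<bullet>w)) \<le> \<bar>g \<bullet> u\<bar> * \<bar>g \<bullet> w\<bar> * (norm u * norm w)"
  proof -
    have "- ((g\<bullet>u)*(g\<bullet>w)*(u\<bullet>w)) \<le> \<bar>(g\<bullet>u)*(g\<bullet>w)*(u\<bullet>w)\<bar>" by linarith
    also have "\<dots> = \<bar>g \<bullet> u\<bar> * \<bar>g \<bullet> w\<bar> * \<bar>u\<bullet>w\<bar>" by (simp add: abs_mult)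
    also have "\<dots> \<le> \<bar>g \<bullet> u\<bar> * \<bar>g \<bullet> w\<bar> * (norm u * norm w)"
      by (intro mult_left_mono Cauchy_Schwarz_ineq2) auto
    finally show ?thesis .
  qed
  then show ?thesis unfolding id2 by (rule aux)
qed

lemma final:
  fixes G D h \<alpha> \<beta> Pu Pw Sm sn :: real
  assumes G: "G \<ge> 0" and D: "D > 0" and al: "\<alpha> > 0" and be: "\<beta> > 0" and Pu: "Pu \<ge> 0" and Pw: "Pw \<ge> 0"
    and ha: "\<alpha>^2 \<le> h" and hb: "\<beta>^2 \<le> h"
    and key: "G*D^2 \<le> (Pu*\<beta>^2 + Pw*\<alpha>^2)^2" and sn: "sn = D/(\<alpha>^2*\<beta>^2)"
    and Sm: "Pu/\<alpha>^2*\<alpha> + Pw/\<beta>^2*\<beta> \<le> Sm"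
  shows "sqrt (G*(D/2)) \<le> sqrt h / sqrt (2 * sn) * Sm"
proof -
  define T where "T = Pu*\<beta> + Pw*\<alpha>"
  have T0: "T \<ge> 0" unfolding T_def using Pu Pw al be by simp
  have hT: "Pu/\<alpha>^2*\<alpha> + Pw/\<beta>^2*\<beta> = T/(\<alpha>*\<beta>)"
    unfolding T_def using al be by (simp add: field_simps power2_eq_square)
  have h0: "h \<ge> 0" using ha by (meson order_trans zero_le_power2)
  have as: "\<alpha> \<le> sqrt h" using ha al by (metis less_imp_le real_le_rsqrt)
  have bs: "\<beta> \<le> sqrt h" using hb be by (metis less_imp_le real_le_rsqrt)
  have m1: "Pu*\<beta>^2 \<le> Pu*\<beta>* sqrt h" using bs Pu be
    by (simp add: power2_eq_square mult.assoc mult_left_mono)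
  have m2: "Pw*\<alpha>^2 \<le> Pw*\<alpha>* sqrt h" using as Pw al
    by (simp add: power2_eq_square mult.assoc mult_left_mono)
  have m: "Pu*\<beta>^2 + Pw*\<alpha>^2 \<le> sqrt h * T" using m1 m2 unfolding T_def by (simp add: algebra_simps)
  have m0: "0 \<le> Pu*\<beta>^2 + Pw*\<alpha>^2" using Pu Pw by simp
  have "(Pu*\<beta>^2 + Pw*\<alpha>^2)^2 \<le> (sqrt h * T)^2" by (rule power_mono[OF m m0])
  also have "\<dots> = h * T^2" using h0 by (simp add: power_mult_distrib)
  finally have k1: "G*D^2 \<le> h*T^2" using key by linarith
  have snpos: "sn > 0" using sn D al be by simp
  define R0 where "R0 = sqrt h / sqrt (2 * sn) * (T/(\<alpha>*\<beta>))"
  have R00: "R0 \<ge> 0" unfolding R0_def using T0 al be snpos h0 by simp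
  have R0sq: "R0^2 = h*T^2/(2*D)"
  proof -
    have "R0^2 = (sqrt h)^2 / (sqrt (2 * sn))^2 * (T^2/(\<alpha>*\<beta>)^2)"
      unfolding R0_def by (simp only: power_mult_distrib power_divide)
    also have "\<dots> = h/(2 * sn) * (T^2/(\<alpha>*\<beta>)^2)" using h0 snpos by simp
    also have "\<dots> = h*T^2/(2*D)" unfolding sn using al be D by (simp add: field_simps power_mult_distrib)
    finally show ?thesis .
  qed
  have "G*(D/2) \<le> h*T^2/(2*D)" using k1 D by (simp add: field_simps power2_eq_square)
  then have "sqrt (G*(D/2)) \<le> sqrt (R0^2)" unfolding R0sq by (rule real_sqrt_le_mono)
  also have "\<dots> = R0" using R00 by simp
  also have "R0 \<le> sqrt h / sqrt (2 * sn) * Sm" unfolding R0_def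
    using Sm hT h0 snpos by (intro mult_left_mono) auto
  finally show ?thesis .
qed


lemma vec_angle_sin_nonneg: "sin (vec_angle u w) \<ge> 0"
proof -
  have "\<bar>(u \<bullet> w) / (norm u * norm w)\<bar> \<le> 1"
  proof (cases "norm u * norm w > 0")
    case True then show ?thesis by (rule cs1)
  next
    case False then have "norm u * norm w = 0" by (metis mult_nonneg_nonneg norm_ge_zero order_less_le)
    then show ?thesis by auto
  qed
  then have "-1 \<le> (u \<bullet> w) / (norm u * norm w)" "(u \<bullet> w) / (norm u * norm w) \<le> 1"
    using abs_ge_self[of "(u \<bullet> w) / (norm u * norm w)"] abs_ge_minus_self[of "(u \<bullet> w) / (norm u * norm w)"]
    by linarith+
  then have "0 \<le> vec_angle u w" "vec_angle u w \<le> pi" unfolding vec_angle_def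
    by (simp_all add: arccos_lbound arccos_ubound)
  then show ?thesis by (rule sin_ge_zero)
qed

lemma vertex_case:
  fixes p q r g :: "real^2" and h D Sm :: real
  assumes D: "D = \<bar>det2 (q - p) (r - p)\<bar>" "D > 0" and qp: "q \<noteq> p" and rp: "r \<noteq> p"
    and hq: "norm (q - p) \<le> h" and hr: "norm (r - p) \<le> h"
    and Sm: "\<bar>g \<bullet> (q - p)\<bar> / norm (q - p) * sqrt (norm (q - p)) + \<bar>g \<bullet> (r - p)\<bar> / norm (r - p) * sqrt (norm (r - p)) \<le> Sm"
  shows "sqrt ((norm g)^2 * (D/2)) \<le> sqrt h / sqrt (2 * sin (vec_angle (q - p) (r - p))) * Sm"
proof (rule final)
  define \<alpha> where "\<alpha> = sqrt (norm (q - p))"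
  define \<beta> where "\<beta> = sqrt (norm (r - p))"
  have a2: "\<alpha>^2 = norm (q - p)" unfolding \<alpha>_def by simp
  have b2: "\<beta>^2 = norm (r - p)" unfolding \<beta>_def by simp
  show "0 < \<alpha>" unfolding \<alpha>_def using qp by simp
  show "0 < \<beta>" unfolding \<beta>_def using rp by simp
  show "0 \<le> (norm g)^2" by simp
  show "0 < D" by (rule D(2))
  show "0 \<le> \<bar>g \<bullet> (q - p)\<bar>" "0 \<le> \<bar>g \<bullet> (r - p)\<bar>" by simp_all
  show "\<alpha>^2 \<le> h" "\<beta>^2 \<le> h" using a2 b2 hq hr by simp_all
  have "D^2 = (det2 (q - p) (r - p))^2" using D(1) by simp
  then show "(norm g)^2 * D^2 \<le> (\<bar>g \<bullet> (q - p)\<bar> * \<beta>^2 + \<bar>g \<bullet> (r - p)\<bar> * \<alpha>^2)^2"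
    using keyineq[of g "q - p" "r - p"] a2 b2 by simp
  show "sin (vec_angle (q - p) (r - p)) = D / (\<alpha>^2 * \<beta>^2)"
    using sin_angle[of "q - p" "r - p"] qp rp D(1) a2 b2 by simp
  show "\<bar>g \<bullet> (q - p)\<bar> / \<alpha>^2 * \<alpha> + \<bar>g \<bullet> (r - p)\<bar> / \<beta>^2 * \<beta> \<le> Sm"
    using Sm a2 b2 unfolding \<alpha>_def \<beta>_def by simp
qed


lemma Fsym: fixes g p q :: "real^2"
  shows "\<bar>g \<bullet> (q - p)\<bar> / norm (q - p) * sqrt (norm (q - p)) = \<bar>g \<bullet> (p - q)\<bar> / norm (p - q) * sqrt (norm (p - q))"
proof -
  have "\<bar>g \<bullet> (q - p)\<bar> = \<bar>g \<bullet> (p - q)\<bar>" by (simp add: inner_diff_right abs_minus_commute)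
  moreover have "norm (q - p) = norm (p - q)" by (rule norm_minus_commute)
  ultimately show ?thesis by simp
qed

theorem lemmaC1:
  fixes a b c :: "real^2" and v :: "real^2 \<Rightarrow> real" and g :: "real^2" and d :: real
  assumes "\<not> collinear {a, b, c}"
    and "\<forall>x\<in>convex hull {a, b, c}. v x = g \<bullet> x + d"
  shows "L2_norm_region (convex hull {a, b, c}) (\<lambda>x. norm g)
         \<le> sqrt (diameter (convex hull {a, b, c})) / sqrt (2 * sin (max_angle a b c))
           * (L2_norm_edge b c (\<lambda>x. g \<bullet> unit_tangent b c)
              + L2_norm_edge c a (\<lambda>x. g \<bullet> unit_tangent c a)
              + L2_norm_edge a b (\<lambda>x. g \<bullet> unit_tangent a b))"
proof -
  define X where "X = (c $ 1 - a $ 1) * (b $ 2 - a $ 2) - (b $ 1 - a $ 1) * (c $ 2 - a $ 2)"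
  define D where "D = \<bar>X\<bar>"
  define F where "F p q = \<bar>g \<bullet> (q - p)\<bar> / norm (q - p) * sqrt (norm (q - p))" for p q :: "real^2"
  define h where "h = diameter (convex hull {a, b, c})"
  define Sm where "Sm = F b c + F c a + F a b"
  have FS: "F p q = F q p" for p q unfolding F_def by (rule Fsym)
  have F0: "F p q \<ge> 0" for p q unfolding F_def by simp
  have L: "L2_norm_region (convex hull {a, b, c}) (\<lambda>x. norm g) = sqrt ((norm g)^2 * (D/2))"
    unfolding L2_norm_region_def area_int D_def X_def by simp
  have R: "L2_norm_edge b c (\<lambda>x. g \<bullet> unit_tangent b c)
              + L2_norm_edge c a (\<lambda>x. g \<bullet> unit_tangent c a)
              + L2_norm_edge a b (\<lambda>x. g \<bullet> unit_tangent a b) = Sm"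
    unfolding edge_norm Sm_def F_def ..
  have bd: "bounded (convex hull {a, b, c})"
    by (simp add: compact_imp_bounded compact_convex_hull)
  have h0: "h \<ge> 0" unfolding h_def using bd by (rule diameter_ge_0)
  have hd: "norm (x - y) \<le> h" if "x \<in> {a,b,c}" "y \<in> {a,b,c}" for x y
  proof -
    have "x \<in> convex hull {a,b,c}" "y \<in> convex hull {a,b,c}" using that by (auto intro: hull_inc)
    then show ?thesis unfolding h_def using diameter_bounded_bound[OF bd] by (simp add: dist_norm)
  qed
  have Sm0: "Sm \<ge> 0" unfolding Sm_def using F0 by (simp add: add_nonneg_nonneg)
  have sn0: "sin (max_angle a b c) \<ge> 0"
    unfolding max_angle_def max_def using vec_angle_sin_nonneg by auto
  have goal: "sqrt ((norm g)^2 * (D/2)) \<le> sqrt h / sqrt (2 * sin (max_angle a b c)) * Sm"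
  proof (cases "D = 0")
    case True
    then show ?thesis using h0 sn0 Sm0 by simp
  next
    case False
    then have Dp: "D > 0" unfolding D_def by simp
    have ab: "a \<noteq> b" using False unfolding D_def X_def by auto
    have bc: "b \<noteq> c" using False unfolding D_def X_def by auto
    have ac: "a \<noteq> c" using False unfolding D_def X_def by auto
    have d1: "det2 (b - a) (c - a) = - X" unfolding det2_def X_def by (simp add: algebra_simps)
    have d2: "det2 (a - b) (c - b) = X" unfolding det2_def X_def by (simp add: algebra_simps)
    have d3: "det2 (a - c) (b - c) = - X" unfolding det2_def X_def by (simp add: algebra_simps)
    have "max_angle a b c = vec_angle (b - a) (c - a) \<or> max_angle a b c = vec_angle (a - b) (c - b)
          \<or> max_angle a b c = vec_angle (a - c) (b - c)"
      unfolding max_angle_def max_def by auto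
    then show ?thesis
    proof (elim disjE)
      assume m: "max_angle a b c = vec_angle (b - a) (c - a)"
      have S1: "F a b + F a c \<le> Sm" unfolding Sm_def using FS[of c a] F0[of b c] by simp
      show ?thesis unfolding m
      proof (rule vertex_case)
        show "D = \<bar>det2 (b - a) (c - a)\<bar>" unfolding d1 D_def by simp
      qed (use Dp ab ac hd S1 in \<open>auto simp: F_def\<close>)
    next
      assume m: "max_angle a b c = vec_angle (a - b) (c - b)"
      have S1: "F b a + F b c \<le> Sm" unfolding Sm_def using FS[of a b] F0[of c a] by simp
      show ?thesis unfolding m
      proof (rule vertex_case)
        show "D = \<bar>det2 (a - b) (c - b)\<bar>" unfolding d2 D_def by simp
      qed (use Dp ab bc hd S1 in \<open>auto simp: F_def\<close>)
    next
      assume m: "max_angle a b c = vec_angle (a - c) (b - c)"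
      have S1: "F c a + F c b \<le> Sm" unfolding Sm_def using FS[of b c] F0[of a b] by simp
      show ?thesis unfolding m
      proof (rule vertex_case)
        show "D = \<bar>det2 (a - c) (b - c)\<bar>" unfolding d3 D_def by simp
      qed (use Dp ac bc hd S1 in \<open>auto simp: F_def\<close>)
    qed
  qed
  show ?thesis unfolding L R h_def[symmetric] by (rule goal)
qed

end
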